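(* Let $\Sigma$ be a shift space, $Y$ an irreducible shift of finite type, and $\phi : \Sigma \to Y$ a right closing open code. Then $\Sigma$ is a nonwandering shift of finite type.
   Context: Shift spaces are closed shift-invariant subsets of $\mathcal{A}^{\mathbb{Z}}$; a code is a continuous shift-commuting map; open: images of open sets are open. Irreducible: for all words $u,v$ there is $w$ with $uwv$ a word. Nonwandering: for every word $u$ there is $w$ with $uwu$ a word. Right closing: $\phi$ never identifies two distinct left asymptotic points, where $x,\bar x$ are left asymptotic if $d(\sigma^{-n}x,\sigma^{-n}\bar x)\to0$, $d(x,\bar x)=2^{-k}$ with $k$ maximal such that $x_{[-k,k]}=\bar x_{[-k,k]}$. *)

theory Defs
  imports Main
begin

definition shift :: "(int \<Rightarrow> 'a) \<Rightarrow> (int \<Rightarrow> 'a)" where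
  "shift x = (\<lambda>i. x (i + 1))"

text \<open>x and y agree on the central window [-k,k], i.e. d(x,y) <= 2^-k.\<close>
definition agree :: "nat \<Rightarrow> (int \<Rightarrow> 'a) \<Rightarrow> (int \<Rightarrow> 'a) \<Rightarrow> bool" where
  "agree k x y \<longleftrightarrow> (\<forall>i. - int k \<le> i \<and> i \<le> int k \<longrightarrow> x i = y i)"

definition closed_set :: "(int \<Rightarrow> 'a) set \<Rightarrow> bool" where
  "closed_set X \<longleftrightarrow> (\<forall>x. (\<forall>k. \<exists>y\<in>X. agree k x y) \<longrightarrow> x \<in> X)"

definition shift_space :: "(int \<Rightarrow> 'a::finite) set \<Rightarrow> bool" where
  "shift_space X \<longleftrightarrow> closed_set X \<and> shift ` X = X"

definition occurs_at :: "'a list \<Rightarrow> (int \<Rightarrow> 'a) \<Rightarrow> int \<Rightarrow> bool" where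
  "occurs_at w x i \<longleftrightarrow> (\<forall>j < length w. x (i + int j) = w ! j)"

definition words :: "(int \<Rightarrow> 'a) set \<Rightarrow> 'a list set" where
  "words X = {w. \<exists>x\<in>X. \<exists>i. occurs_at w x i}"

definition X_forbid :: "'a list set \<Rightarrow> (int \<Rightarrow> 'a) set" where
  "X_forbid F = {x. \<forall>w\<in>F. \<forall>i. \<not> occurs_at w x i}"

definition SFT :: "(int \<Rightarrow> 'a::finite) set \<Rightarrow> bool" where
  "SFT X \<longleftrightarrow> (\<exists>F. finite F \<and> X = X_forbid F)"

definition irreducible :: "(int \<Rightarrow> 'a) set \<Rightarrow> bool" where
  "irreducible X \<longleftrightarrow> (\<forall>u\<in>words X. \<forall>v\<in>words X. \<exists>w. u @ w @ v \<in> words X)"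

definition nonwandering :: "(int \<Rightarrow> 'a) set \<Rightarrow> bool" where
  "nonwandering X \<longleftrightarrow> (\<forall>u\<in>words X. \<exists>w. u @ w @ u \<in> words X)"

definition rel_open :: "(int \<Rightarrow> 'a) set \<Rightarrow> (int \<Rightarrow> 'a) set \<Rightarrow> bool" where
  "rel_open X U \<longleftrightarrow> U \<subseteq> X \<and> (\<forall>x\<in>U. \<exists>k. \<forall>y\<in>X. agree k x y \<longrightarrow> y \<in> U)"

definition continuous_on_shift ::
  "(int \<Rightarrow> 'a) set \<Rightarrow> ((int \<Rightarrow> 'a) \<Rightarrow> (int \<Rightarrow> 'b)) \<Rightarrow> bool" where
  "continuous_on_shift X \<phi> \<longleftrightarrow>
     (\<forall>x\<in>X. \<forall>k. \<exists>m. \<forall>y\<in>X. agree m x y \<longrightarrow> agree k (\<phi> x) (\<phi> y))"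

definition code ::
  "(int \<Rightarrow> 'a) set \<Rightarrow> (int \<Rightarrow> 'b) set \<Rightarrow> ((int \<Rightarrow> 'a) \<Rightarrow> (int \<Rightarrow> 'b)) \<Rightarrow> bool" where
  "code X Y \<phi> \<longleftrightarrow> \<phi> ` X \<subseteq> Y \<and> continuous_on_shift X \<phi> \<and>
     (\<forall>x\<in>X. \<phi> (shift x) = shift (\<phi> x))"

definition open_code ::
  "(int \<Rightarrow> 'a) set \<Rightarrow> (int \<Rightarrow> 'b) set \<Rightarrow> ((int \<Rightarrow> 'a) \<Rightarrow> (int \<Rightarrow> 'b)) \<Rightarrow> bool" where
  "open_code X Y \<phi> \<longleftrightarrow> code X Y \<phi> \<and> (\<forall>U. rel_open X U \<longrightarrow> rel_open Y (\<phi> ` U))"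

text \<open>Left asymptotic: d(shift^-n x, shift^-n y) -> 0, i.e. x and y agree on
  some left ray (-infinity, N].\<close>
definition left_asymptotic :: "(int \<Rightarrow> 'a) \<Rightarrow> (int \<Rightarrow> 'a) \<Rightarrow> bool" where
  "left_asymptotic x y \<longleftrightarrow> (\<exists>N. \<forall>i\<le>N. x i = y i)"

definition right_closing ::
  "(int \<Rightarrow> 'a) set \<Rightarrow> ((int \<Rightarrow> 'a) \<Rightarrow> (int \<Rightarrow> 'b)) \<Rightarrow> bool" where
  "right_closing X \<phi> \<longleftrightarrow>
     (\<forall>x\<in>X. \<forall>y\<in>X. left_asymptotic x y \<and> x \<noteq> y \<longrightarrow> \<phi> x \<noteq> \<phi> y)"

end

theory Submission
  imports Defs "HOL-Library.Infinite_Set"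
begin


definition tr :: "int \<Rightarrow> (int \<Rightarrow> 'a) \<Rightarrow> (int \<Rightarrow> 'a)" where
  "tr n x = (\<lambda>i. x (i + n))"

lemma tr_tr: "tr a (tr b x) = tr (a+b) x"
  by (simp add: tr_def ac_simps)

lemma tr_0[simp]: "tr 0 x = x"
  by (simp add: tr_def)

lemma shift_tr: "shift x = tr 1 x"
  by (simp add: shift_def tr_def)

lemma agree_sym: "agree k x y = agree k y x"
  by (auto simp: agree_def)

lemma agree_trans: "agree k x y \<Longrightarrow> agree k y z \<Longrightarrow> agree k x z"
  by (auto simp: agree_def)

lemma agree_mono: "agree k x y \<Longrightarrow> k' \<le> k \<Longrightarrow> agree k' x y"
  by (auto simp: agree_def)

lemma agree_tr: "agree k (tr t x) (tr t y) \<longleftrightarrow> (\<forall>i. t - int k \<le> i \<and> i \<le> t + int k \<longrightarrow> x i = y i)"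
proof
  assume a: "agree k (tr t x) (tr t y)"
  show "\<forall>i. t - int k \<le> i \<and> i \<le> t + int k \<longrightarrow> x i = y i"
  proof (intro allI impI)
    fix i assume "t - int k \<le> i \<and> i \<le> t + int k"
    then have "- int k \<le> i - t \<and> i - t \<le> int k" by arith
    with a have "tr t x (i - t) = tr t y (i - t)" unfolding agree_def by blast
    then show "x i = y i" by (simp add: tr_def)
  qed
next
  assume a: "\<forall>i. t - int k \<le> i \<and> i \<le> t + int k \<longrightarrow> x i = y i"
  show "agree k (tr t x) (tr t y)" unfolding agree_def tr_def
  proof (intro allI impI)
    fix i :: int assume "- int k \<le> i \<and> i \<le> int k"
    then have "t - int k \<le> i + t \<and> i + t \<le> t + int k" by arith
    with a show "x (i + t) = y (i + t)" by blast
  qed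
qed

lemma occurs_tr: "occurs_at w (tr n x) i = occurs_at w x (i + n)"
  by (simp add: occurs_at_def tr_def ac_simps)

lemma X_forbid_tr: "x \<in> X_forbid F \<Longrightarrow> tr n x \<in> X_forbid F"
  by (simp add: X_forbid_def occurs_tr)

lemma infinite_split:
  fixes s :: "nat \<Rightarrow> int \<Rightarrow> 'c::finite"
  assumes "infinite I"
  shows "\<exists>J. infinite J \<and> J \<subseteq> I \<and> (\<forall>n\<in>J. \<forall>n'\<in>J. s n k = s n' k \<and> s n (-k) = s n' (-k))"
proof -
  have eq: "I = (\<Union>p\<in>(UNIV::('c\<times>'c) set). {n\<in>I. s n k = fst p \<and> s n (-k) = snd p})" by auto
  have "\<exists>p. infinite {n\<in>I. s n k = fst p \<and> s n (-k) = snd p}"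
  proof (rule ccontr)
    assume "\<nexists>p. infinite {n\<in>I. s n k = fst p \<and> s n (-k) = snd p}"
    then have "finite (\<Union>p\<in>(UNIV::('c\<times>'c) set). {n\<in>I. s n k = fst p \<and> s n (-k) = snd p})"
      by (intro finite_UN_I) auto
    with eq assms show False by simp
  qed
  then obtain p where "infinite {n\<in>I. s n k = fst p \<and> s n (-k) = snd p}" by blast
  then show ?thesis by (intro exI[of _ "{n\<in>I. s n k = fst p \<and> s n (-k) = snd p}"]) auto
qed

lemma cluster:
  fixes s :: "nat \<Rightarrow> int \<Rightarrow> 'c::finite"
  shows "\<exists>x. \<forall>k M. \<exists>n\<ge>M. agree k (s n) x"
proof -
  define Q where "Q J k \<longleftrightarrow> (\<forall>n\<in>J. \<forall>n'\<in>J. s n k = s n' k \<and> s n (-k) = s n' (-k))" for J k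
  define step where "step I k = (SOME J. infinite J \<and> J \<subseteq> I \<and> Q J k)" for I k
  have stepP: "infinite (step I k) \<and> step I k \<subseteq> I \<and> Q (step I k) k" if "infinite I" for I k
    unfolding step_def
    by (rule someI_ex) (use infinite_split[OF that, of s k] in \<open>simp add: Q_def\<close>)
  define I where "I = rec_nat (step UNIV 0) (\<lambda>k J. step J (int (Suc k)))"
  have I0: "I 0 = step UNIV 0" and IS: "I (Suc k) = step (I k) (int (Suc k))" for k
    by (simp_all add: I_def)
  have P: "infinite (I k) \<and> Q (I k) (int k)" for k
  proof (induction k)
    case 0 then show ?case using stepP[of UNIV 0] by (simp add: I0)
  next
    case (Suc k) then show ?case using stepP[of "I k" "int (Suc k)"] by (simp add: IS)
  qed
  have dec: "I (Suc k) \<subseteq> I k" for k using stepP[of "I k" "int (Suc k)"] P[of k] by (simp add: IS)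
  have decle: "I k' \<subseteq> I k" if "k \<le> k'" for k k'
    using that
  proof (induction k' rule: dec_induct)
    case base then show ?case by simp
  next
    case (step m) then show ?case using dec[of m] by blast
  qed
  define x where "x i = s (SOME n. n \<in> I (nat \<bar>i\<bar>)) i" for i
  have "\<exists>n\<ge>M. agree k (s n) x" for k M
  proof -
    from P[of k] obtain n where n: "n \<in> I k" "n \<ge> M"
      by (meson infinite_nat_iff_unbounded_le)
    have "s n i = x i" if "- int k \<le> i" "i \<le> int k" for i
    proof -
      have "nat \<bar>i\<bar> \<le> k" using that by arith
      then have nI: "n \<in> I (nat \<bar>i\<bar>)" using decle n by blast
      then have ex: "\<exists>n. n \<in> I (nat \<bar>i\<bar>)" by blast
      define n0 where "n0 = (SOME n. n \<in> I (nat \<bar>i\<bar>))"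
      have n0: "n0 \<in> I (nat \<bar>i\<bar>)" unfolding n0_def by (rule someI_ex[OF ex])
      have q: "s n (int (nat \<bar>i\<bar>)) = s n0 (int (nat \<bar>i\<bar>)) \<and> s n (- int (nat \<bar>i\<bar>)) = s n0 (- int (nat \<bar>i\<bar>))"
        using P[of "nat \<bar>i\<bar>"] nI n0 unfolding Q_def by blast
      have "i = int (nat \<bar>i\<bar>) \<or> i = - int (nat \<bar>i\<bar>)" by arith
      then have "s n i = s n0 i" using q by auto
      then show ?thesis by (simp add: x_def n0_def)
    qed
    then show ?thesis using n by (auto simp: agree_def)
  qed
  then show ?thesis by blast
qed




lemma cluster2:
  fixes X X' :: "nat \<Rightarrow> int \<Rightarrow> 'c::finite"
  shows "\<exists>x x'. \<forall>k M. \<exists>n\<ge>M. agree k (X n) x \<and> agree k (X' n) x'"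
proof -
  obtain p :: "int \<Rightarrow> 'c \<times> 'c" where p: "\<forall>k M. \<exists>n\<ge>M. agree k (\<lambda>i. (X n i, X' n i)) p"
    using cluster[of "\<lambda>n i. (X n i, X' n i)"] by blast
  have "\<forall>k M. \<exists>n\<ge>M. agree k (X n) (\<lambda>i. fst (p i)) \<and> agree k (X' n) (\<lambda>i. snd (p i))"
  proof (intro allI)
    fix k M
    from p obtain n where "n \<ge> M" "agree k (\<lambda>i. (X n i, X' n i)) p" by blast
    then show "\<exists>n\<ge>M. agree k (X n) (\<lambda>i. fst (p i)) \<and> agree k (X' n) (\<lambda>i. snd (p i))"
      unfolding agree_def by (intro exI[of _ n]) (auto, (metis fst_conv snd_conv)+)
  qed
  then show ?thesis by blast
qed

locale setting =
  fixes S :: "(int \<Rightarrow> 'a::finite) set" and Y :: "(int \<Rightarrow> 'b::finite) set"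
    and phi :: "(int \<Rightarrow> 'a) \<Rightarrow> (int \<Rightarrow> 'b)"
  assumes ss: "shift_space S" and oc: "open_code S Y phi" and rc: "right_closing S phi"
begin

lemma closedS: "closed_set S" using ss by (simp add: shift_space_def)
lemma codeS: "code S Y phi" using oc by (simp add: open_code_def)
lemma contS: "continuous_on_shift S phi" using codeS by (simp add: code_def)
lemma imgY: "x \<in> S \<Longrightarrow> phi x \<in> Y" using codeS by (auto simp: code_def)
lemma openS: "rel_open S U \<Longrightarrow> rel_open Y (phi ` U)" using oc by (simp add: open_code_def)

lemma S_tr1: "x \<in> S \<Longrightarrow> tr 1 x \<in> S"
  using ss by (auto simp: shift_space_def shift_tr[symmetric])

lemma S_trm1: "x \<in> S \<Longrightarrow> tr (-1) x \<in> S \<and> x = tr 1 (tr (-1) x)"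
proof -
  assume "x \<in> S"
  then have "x \<in> shift ` S" using ss by (simp add: shift_space_def)
  then obtain y where y: "y \<in> S" "x = tr 1 y" by (auto simp: shift_tr)
  then have "tr (-1) x = y" by (simp add: tr_tr)
  then show ?thesis using y by (simp add: tr_tr)
qed

lemma phi_tr1: "x \<in> S \<Longrightarrow> phi (tr 1 x) = tr 1 (phi x)"
  using codeS by (auto simp: code_def shift_tr)

lemma int_cases': obtains m where "n = int m" | m where "n = - int m"
proof -
  have "n = int (nat n) \<or> n = - int (nat (- n))" by arith
  then show ?thesis using that by blast
qed

lemma S_tr: "x \<in> S \<Longrightarrow> tr n x \<in> S \<and> phi (tr n x) = tr n (phi x)"
proof -
  have pos: "\<forall>x\<in>S. tr (int m) x \<in> S \<and> phi (tr (int m) x) = tr (int m) (phi x)" for m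
  proof (induction m)
    case 0 then show ?case by simp
  next
    case (Suc m)
    show ?case
    proof
      fix x assume x: "x \<in> S"
      have e: "tr (int (Suc m)) x = tr 1 (tr (int m) x)" by (simp add: tr_tr add.commute)
      have e2: "tr (int (Suc m)) (phi x) = tr 1 (tr (int m) (phi x))" by (simp add: tr_tr add.commute)
      from Suc x have "tr (int m) x \<in> S" "phi (tr (int m) x) = tr (int m) (phi x)" by blast+
      then show "tr (int (Suc m)) x \<in> S \<and> phi (tr (int (Suc m)) x) = tr (int (Suc m)) (phi x)"
        unfolding e e2 using S_tr1 phi_tr1 by simp
    qed
  qed
  have neg: "\<forall>x\<in>S. tr (- int m) x \<in> S \<and> phi (tr (- int m) x) = tr (- int m) (phi x)" for m
  proof (induction m)
    case 0 then show ?case by simp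
  next
    case (Suc m)
    show ?case
    proof
      fix x assume x: "x \<in> S"
      have e: "tr (- int (Suc m)) x = tr (-1) (tr (- int m) x)" by (simp add: tr_tr)
      from Suc x have z: "tr (- int m) x \<in> S" by blast
      define z where "z = tr (- int m) x"
      have zS: "z \<in> S" using z z_def by simp
      have "phi z = phi (tr 1 (tr (-1) z))" using S_trm1[OF zS] by simp
      also have "\<dots> = tr 1 (phi (tr (-1) z))" using S_trm1[OF zS] phi_tr1 by blast
      finally have "tr (-1) (phi z) = phi (tr (-1) z)" by (simp add: tr_tr)
      then show "tr (- int (Suc m)) x \<in> S \<and> phi (tr (- int (Suc m)) x) = tr (- int (Suc m)) (phi x)"
        using Suc x S_trm1[OF zS] e z_def by (simp add: tr_tr)
    qed
  qed
  assume "x \<in> S"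
  then show ?thesis using pos neg by (cases n rule: int_cases') auto
qed

lemma limit_in_S:
  assumes "\<forall>n. X n \<in> S" "\<forall>k M. \<exists>n\<ge>M. agree k (X n) x"
  shows "x \<in> S"
  using closedS assms unfolding closed_set_def by (metis agree_sym)

lemma unif_cont: "\<exists>r. \<forall>x\<in>S. \<forall>x'\<in>S. agree r x x' \<longrightarrow> phi x 0 = phi x' 0"
proof (rule ccontr)
  assume H: "\<not> ?thesis"
  then have "\<forall>n. \<exists>q. fst q \<in> S \<and> snd q \<in> S \<and> agree n (fst q) (snd q) \<and> phi (fst q) 0 \<noteq> phi (snd q) 0"
    by (metis fst_conv snd_conv)
  then obtain Q where Q: "\<forall>n. fst (Q n) \<in> S \<and> snd (Q n) \<in> S \<and> agree n (fst (Q n)) (snd (Q n)) \<and> phi (fst (Q n)) 0 \<noteq> phi (snd (Q n)) 0"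
    by (rule choice[THEN exE]) (rule that)
  obtain x x' where c: "\<forall>k M. \<exists>n\<ge>M. agree k (fst (Q n)) x \<and> agree k (snd (Q n)) x'"
    using cluster2[of "\<lambda>n. fst (Q n)" "\<lambda>n. snd (Q n)"] by blast
  have xS: "x \<in> S" using limit_in_S[of "\<lambda>n. fst (Q n)" x] Q c by blast
  obtain m where m: "\<forall>y\<in>S. agree m x y \<longrightarrow> agree 0 (phi x) (phi y)"
    using contS xS unfolding continuous_on_shift_def by blast
  obtain n where n: "n \<ge> m" "agree m (fst (Q n)) x" "agree m (snd (Q n)) x'" using c by blast
  have "agree m (fst (Q n)) (snd (Q n))" using Q agree_mono n(1) by blast
  then have "agree m x (snd (Q n))" using n(2) agree_trans agree_sym by metis
  then have a1: "phi x 0 = phi (snd (Q n)) 0" using m Q by (auto simp: agree_def)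
  have "phi x 0 = phi (fst (Q n)) 0" using m Q n(2) agree_sym by (auto simp: agree_def)
  with a1 Q show False by metis
qed

end



lemma agree_at: "agree k x y \<Longrightarrow> - int k \<le> i \<Longrightarrow> i \<le> int k \<Longrightarrow> x i = y i"
  by (simp add: agree_def)

lemma agree_abs: "agree k x y \<Longrightarrow> nat \<bar>i\<bar> \<le> k \<Longrightarrow> x i = y i"
  by (rule agree_at) auto

context setting begin

lemma phi_cont_at:
  assumes "x \<in> S" "x \<in> S" "x' \<in> S" and c: "\<forall>y\<in>S. agree m x y \<longrightarrow> agree k (phi x) (phi y)"
  shows True by simp

lemma rclose: "\<exists>N. \<forall>x\<in>S. \<forall>x'\<in>S. (\<forall>i. - int N \<le> i \<and> i \<le> 0 \<longrightarrow> x i = x' i) \<and>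
   (\<forall>i. - int N \<le> i \<and> i \<le> int N \<longrightarrow> phi x i = phi x' i) \<longrightarrow> x 1 = x' 1"
proof (rule ccontr)
  let ?Z = S
  let ?R = "\<lambda>n x x'. (\<forall>i. - int n \<le> i \<and> i \<le> 0 \<longrightarrow> x i = x' i) \<and>
   (\<forall>i. - int n \<le> i \<and> i \<le> int n \<longrightarrow> phi x i = phi x' i) \<longrightarrow> x 1 = x' 1"
  let ?P = "\<lambda>n x x'. x \<in> S \<and> x' \<in> S \<and> (\<forall>i. - int n \<le> i \<and> i \<le> 0 \<longrightarrow> x i = x' i) \<and>
   (\<forall>i. - int n \<le> i \<and> i \<le> int n \<longrightarrow> phi x i = phi x' i) \<and> x 1 \<noteq> x' 1"
  assume H: "\<not> ?thesis"
  have "\<exists>q. ?P n (fst q) (snd q)" for n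
  proof -
    from H have "\<forall>l. \<exists>x\<in>S. \<exists>x'\<in>?Z. \<not> ?R l x x'" by simp
    then obtain x x' where "x \<in> S" "x' \<in> ?Z" "\<not> ?R n x x'" by blast
    then have "?P n x x'" by simp
    then show ?thesis by (intro exI[of _ "(x, x')"]) simp
  qed
  then have "\<forall>n. \<exists>q. ?P n (fst q) (snd q)" by blast
  then obtain Q where Q: "\<forall>n. ?P n (fst (Q n)) (snd (Q n))"
    by (rule choice[THEN exE]) (rule that)
  obtain x x' where c: "\<forall>k M. \<exists>n\<ge>M. agree k (fst (Q n)) x \<and> agree k (snd (Q n)) x'"
    using cluster2[of "\<lambda>n. fst (Q n)" "\<lambda>n. snd (Q n)"] by blast
  have xS: "x \<in> S" using limit_in_S[of "\<lambda>n. fst (Q n)" x] Q c by blast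
  have xS': "x' \<in> S" using limit_in_S[of "\<lambda>n. snd (Q n)" x'] Q c by blast
  have la: "x i = x' i" if "i \<le> 0" for i
  proof -
    obtain n where n: "n \<ge> nat \<bar>i\<bar>" "agree (nat \<bar>i\<bar>) (fst (Q n)) x" "agree (nat \<bar>i\<bar>) (snd (Q n)) x'"
      using c by blast
    have "- int n \<le> i \<and> i \<le> 0" using n(1) that by arith
    then have "fst (Q n) i = snd (Q n) i" using Q by blast
    then show ?thesis using agree_abs[OF n(2)] agree_abs[OF n(3)] by simp
  qed
  have ne: "x 1 \<noteq> x' 1"
  proof -
    obtain n where n: "agree 1 (fst (Q n)) x" "agree 1 (snd (Q n)) x'"
      using c by blast
    have "fst (Q n) 1 \<noteq> snd (Q n) 1" using Q by blast
    then show ?thesis using agree_at[OF n(1), of 1] agree_at[OF n(2), of 1] by auto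
  qed
  have eq: "phi x i = phi x' i" for i
  proof -
    obtain m1 where m1: "\<forall>y\<in>S. agree m1 x y \<longrightarrow> agree (nat \<bar>i\<bar>) (phi x) (phi y)"
      using contS xS unfolding continuous_on_shift_def by blast
    obtain m2 where m2: "\<forall>y\<in>S. agree m2 x' y \<longrightarrow> agree (nat \<bar>i\<bar>) (phi x') (phi y)"
      using contS xS' unfolding continuous_on_shift_def by blast
    obtain n where n: "n \<ge> nat \<bar>i\<bar>" "agree (max m1 m2) (fst (Q n)) x" "agree (max m1 m2) (snd (Q n)) x'"
      using c by blast
    have QS: "fst (Q n) \<in> S" "snd (Q n) \<in> S" using Q by blast+
    have "agree m1 (fst (Q n)) x" by (rule agree_mono[OF n(2)]) simp
    then have "agree m1 x (fst (Q n))" by (subst agree_sym)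
    then have A1: "agree (nat \<bar>i\<bar>) (phi x) (phi (fst (Q n)))" using m1 QS by blast
    have "agree m2 (snd (Q n)) x'" by (rule agree_mono[OF n(3)]) simp
    then have "agree m2 x' (snd (Q n))" by (subst agree_sym)
    then have A2: "agree (nat \<bar>i\<bar>) (phi x') (phi (snd (Q n)))" using m2 QS by blast
    have A3: "phi (fst (Q n)) i = phi (snd (Q n)) i"
    proof -
      have "- int n \<le> i \<and> i \<le> int n" using n(1) by arith
      then show ?thesis using Q by blast
    qed
    have "phi x i = phi (fst (Q n)) i" using agree_abs[OF A1] by simp
    moreover have "phi x' i = phi (snd (Q n)) i" using agree_abs[OF A2] by simp
    ultimately show ?thesis using A3 by simp
  qed
  have "left_asymptotic x x'" unfolding left_asymptotic_def using la by blast
  moreover have "x \<noteq> x'" using ne by blast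
  ultimately have "phi x \<noteq> phi x'" using rc xS xS' unfolding right_closing_def by blast
  with eq show False by blast
qed

lemma unif_open: "\<exists>l. \<forall>x\<in>S. \<forall>w\<in>Y. agree l (phi x) w \<longrightarrow> (\<exists>z\<in>S. agree k x z \<and> phi z = w)"
proof (rule ccontr)
  let ?Z = Y
  let ?R = "\<lambda>n x w. agree n (phi x) w \<longrightarrow> (\<exists>z\<in>S. agree k x z \<and> phi z = w)"
  let ?P = "\<lambda>n x w. x \<in> S \<and> w \<in> Y \<and> agree n (phi x) w \<and> \<not> (\<exists>z\<in>S. agree k x z \<and> phi z = w)"
  assume H: "\<not> ?thesis"
  have "\<exists>q. ?P n (fst q) (snd q)" for n
  proof -
    from H have "\<forall>l. \<exists>x\<in>S. \<exists>x'\<in>?Z. \<not> ?R l x x'" by simp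
    then obtain x x' where "x \<in> S" "x' \<in> ?Z" "\<not> ?R n x x'" by blast
    then have "?P n x x'" by simp
    then show ?thesis by (intro exI[of _ "(x, x')"]) simp
  qed
  then have "\<forall>n. \<exists>q. ?P n (fst q) (snd q)" by blast
  then obtain Q where Q: "\<forall>n. ?P n (fst (Q n)) (snd (Q n))"
    by (rule choice[THEN exE]) (rule that)
  obtain x where c: "\<forall>k M. \<exists>n\<ge>M. agree k (fst (Q n)) x"
    using cluster[of "\<lambda>n. fst (Q n)"] by blast
  have xS: "x \<in> S" using limit_in_S[of "\<lambda>n. fst (Q n)" x] Q c by blast
  define U where "U = {z\<in>S. agree k x z}"
  have "rel_open S U" unfolding rel_open_def
  proof (intro conjI ballI)
    show "U \<subseteq> S" by (auto simp: U_def)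
    fix z assume "z \<in> U"
    then have "agree k x z" by (simp add: U_def)
    then have "\<forall>y\<in>S. agree k z y \<longrightarrow> y \<in> U" unfolding U_def using agree_trans by blast
    then show "\<exists>k. \<forall>y\<in>S. agree k z y \<longrightarrow> y \<in> U" by blast
  qed
  then have "rel_open Y (phi ` U)" by (rule openS)
  moreover have "x \<in> U" using xS by (simp add: U_def agree_def)
  then have "phi x \<in> phi ` U" by blast
  ultimately obtain l0 where l0: "\<forall>w\<in>Y. agree l0 (phi x) w \<longrightarrow> w \<in> phi ` U"
    unfolding rel_open_def by blast
  obtain m where m: "\<forall>y\<in>S. agree m x y \<longrightarrow> agree l0 (phi x) (phi y)"
    using contS xS unfolding continuous_on_shift_def by blast
  obtain n where n: "n \<ge> l0" "agree (max m k) (fst (Q n)) x" using c by blast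
  have QS: "fst (Q n) \<in> S" "agree n (phi (fst (Q n))) (snd (Q n))" using Q by blast+
  have "agree m (fst (Q n)) x" by (rule agree_mono[OF n(2)]) simp
  then have "agree m x (fst (Q n))" by (subst agree_sym)
  then have "agree l0 (phi x) (phi (fst (Q n)))" using m QS by blast
  moreover have "agree l0 (phi (fst (Q n))) (snd (Q n))" using QS(2) n(1) by (rule agree_mono)
  ultimately have "agree l0 (phi x) (snd (Q n))" by (rule agree_trans)
  then have "snd (Q n) \<in> phi ` U" using l0 Q by blast
  then obtain z where "z \<in> U" and z3: "phi z = snd (Q n)" by (rule imageE) simp
  then have z: "z \<in> S" "agree k x z" "phi z = snd (Q n)" by (simp_all add: U_def)
  have "agree k (fst (Q n)) x" by (rule agree_mono[OF n(2)]) simp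
  then have "agree k (fst (Q n)) z" using z(2) by (rule agree_trans)
  moreover have "\<not> (\<exists>z\<in>S. agree k (fst (Q n)) z \<and> phi z = snd (Q n))" using Q by blast
  ultimately show False using z by blast
qed

end



lemma glue_forbid:
  assumes L: "\<forall>f\<in>F. length f \<le> L" and a: "a \<in> X_forbid F" and b: "b \<in> X_forbid F"
    and ab: "\<forall>i. c < i \<and> i \<le> c + int L \<longrightarrow> a i = b i"
  shows "(\<lambda>i. if i \<le> c then a i else b i) \<in> X_forbid F"
  unfolding X_forbid_def
proof (intro CollectI ballI allI notI)
  fix f i assume f: "f \<in> F" and occ: "occurs_at f (\<lambda>i. if i \<le> c then a i else b i) i"
  have lf: "length f \<le> L" using L f by blast
  show False
  proof (cases "i \<le> c")
    case True
    have "occurs_at f a i" unfolding occurs_at_def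
    proof (intro allI impI)
      fix j assume j: "j < length f"
      then have e: "(if i + int j \<le> c then a (i + int j) else b (i + int j)) = f ! j"
        using occ by (simp add: occurs_at_def)
      show "a (i + int j) = f ! j"
      proof (cases "i + int j \<le> c")
        case True then show ?thesis using e by simp
      next
        case False
        then have "c < i + int j \<and> i + int j \<le> c + int L" using True j lf by linarith
        then show ?thesis using e ab False by simp
      qed
    qed
    then show False using a f unfolding X_forbid_def by blast
  next
    case False
    have "occurs_at f b i" unfolding occurs_at_def
    proof (intro allI impI)
      fix j assume j: "j < length f"
      then have e: "(if i + int j \<le> c then a (i + int j) else b (i + int j)) = f ! j"
        using occ by (simp add: occurs_at_def)
      have "\<not> i + int j \<le> c" using False by linarith
      then show "b (i + int j) = f ! j" using e by simp
    qed
    then show False using b f unfolding X_forbid_def by blast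
  qed
qed

context setting begin

definition RC :: "nat \<Rightarrow> bool" where
  "RC N \<longleftrightarrow> (\<forall>x\<in>S. \<forall>x'\<in>S. \<forall>t. (\<forall>i. t - int N \<le> i \<and> i \<le> t \<longrightarrow> x i = x' i) \<and>
     (\<forall>i. t - int N \<le> i \<and> i \<le> t + int N \<longrightarrow> phi x i = phi x' i) \<longrightarrow> x (t+1) = x' (t+1))"

lemma tr_app: "tr t x i = x (i + t)" by (simp add: tr_def)

lemma rc_exists: "\<exists>N. RC N"
proof -
  obtain N where N: "\<forall>x\<in>S. \<forall>x'\<in>S. (\<forall>i. - int N \<le> i \<and> i \<le> 0 \<longrightarrow> x i = x' i) \<and>
   (\<forall>i. - int N \<le> i \<and> i \<le> int N \<longrightarrow> phi x i = phi x' i) \<longrightarrow> x 1 = x' 1"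
    using rclose by blast
  have "RC N" unfolding RC_def
  proof (intro ballI allI impI)
    fix x x' t assume x: "x \<in> S" and x': "x' \<in> S"
      and h: "(\<forall>i. t - int N \<le> i \<and> i \<le> t \<longrightarrow> x i = x' i) \<and>
     (\<forall>i. t - int N \<le> i \<and> i \<le> t + int N \<longrightarrow> phi x i = phi x' i)"
    have s: "tr t x \<in> S" "tr t x' \<in> S" "phi (tr t x) = tr t (phi x)" "phi (tr t x') = tr t (phi x')"
      using S_tr x x' by blast+
    have "\<forall>i. - int N \<le> i \<and> i \<le> 0 \<longrightarrow> tr t x i = tr t x' i"
    proof (intro allI impI)
      fix i :: int assume "- int N \<le> i \<and> i \<le> 0"
      then have "t - int N \<le> i + t \<and> i + t \<le> t" by arith
      then show "tr t x i = tr t x' i" using h by (simp add: tr_app)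
    qed
    moreover have "\<forall>i. - int N \<le> i \<and> i \<le> int N \<longrightarrow> phi (tr t x) i = phi (tr t x') i"
    proof (intro allI impI)
      fix i :: int assume "- int N \<le> i \<and> i \<le> int N"
      then have "t - int N \<le> i + t \<and> i + t \<le> t + int N" by arith
      then show "phi (tr t x) i = phi (tr t x') i" using h s by (simp add: tr_app)
    qed
    ultimately have "tr t x 1 = tr t x' 1" using N s by blast
    then show "x (t + 1) = x' (t + 1)" by (simp add: tr_app add.commute)
  qed
  then show ?thesis by blast
qed

lemma prop_fin:
  assumes N: "RC N" and x: "x \<in> S" and x': "x' \<in> S"
    and h1: "\<forall>i. a - int N \<le> i \<and> i \<le> a \<longrightarrow> x i = x' i"
    and h2: "\<forall>i. a - int N \<le> i \<and> i \<le> e \<longrightarrow> phi x i = phi x' i"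
    and i: "a - int N \<le> i" "i \<le> e - int N + 1"
  shows "x i = x' i"
proof -
  have main: "a + int m \<le> e - int N + 1 \<longrightarrow> (\<forall>i. a - int N \<le> i \<and> i \<le> a + int m \<longrightarrow> x i = x' i)" for m
  proof (induction m)
    case 0 then show ?case using h1 by simp
  next
    case (Suc m)
    show ?case
    proof (intro impI allI)
      fix i assume le: "a + int (Suc m) \<le> e - int N + 1" and ir: "a - int N \<le> i \<and> i \<le> a + int (Suc m)"
      then have ih: "\<forall>i. a - int N \<le> i \<and> i \<le> a + int m \<longrightarrow> x i = x' i" using Suc by simp
      show "x i = x' i"
      proof (cases "i \<le> a + int m")
        case True then show ?thesis using ih ir by blast
      next
        case False
        then have ieq: "i = (a + int m) + 1" using ir by simp
        have w1: "\<forall>j. (a + int m) - int N \<le> j \<and> j \<le> a + int m \<longrightarrow> x j = x' j"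
          using ih by simp
        have w2: "\<forall>j. (a + int m) - int N \<le> j \<and> j \<le> (a + int m) + int N \<longrightarrow> phi x j = phi x' j"
          using h2 le by simp
        have "x ((a + int m) + 1) = x' ((a + int m) + 1)"
          using N x x' w1 w2 unfolding RC_def by blast
        then show ?thesis using ieq by simp
      qed
    qed
  qed
  show ?thesis
  proof (cases "i \<le> a")
    case True then show ?thesis using h1 i by blast
  next
    case False
    then have "a + int (nat (i - a)) \<le> e - int N + 1" "i \<le> a + int (nat (i - a))" using i by simp_all
    then show ?thesis using main[of "nat (i - a)"] i by blast
  qed
qed

lemma prop_inf:
  assumes N: "RC N" and x: "x \<in> S" and x': "x' \<in> S"
    and h1: "\<forall>i. a - int N \<le> i \<and> i \<le> a \<longrightarrow> x i = x' i"
    and h2: "\<forall>i. a - int N \<le> i \<longrightarrow> phi x i = phi x' i"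
    and i: "a - int N \<le> i"
  shows "x i = x' i"
  by (rule prop_fin[OF N x x' h1, of "i + int N"]) (use h2 i in auto)

lemma cont_at: obtains r where
  "\<And>x x' t. x \<in> S \<Longrightarrow> x' \<in> S \<Longrightarrow> (\<forall>i. t - int r \<le> i \<and> i \<le> t + int r \<longrightarrow> x i = x' i) \<Longrightarrow> phi x t = phi x' t"
proof -
  obtain r where r: "\<forall>x\<in>S. \<forall>x'\<in>S. agree r x x' \<longrightarrow> phi x 0 = phi x' 0" using unif_cont by blast
  have "phi x t = phi x' t" if x: "x \<in> S" and x': "x' \<in> S"
    and h: "\<forall>i. t - int r \<le> i \<and> i \<le> t + int r \<longrightarrow> x i = x' i" for x x' t
  proof -
    have s: "tr t x \<in> S" "tr t x' \<in> S" "phi (tr t x) = tr t (phi x)" "phi (tr t x') = tr t (phi x')"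
      using S_tr x x' by blast+
    have "agree r (tr t x) (tr t x')" using h by (simp add: agree_tr)
    then have "phi (tr t x) 0 = phi (tr t x') 0" using r s by blast
    then show ?thesis using s by (simp add: tr_app)
  qed
  then show ?thesis using that by blast
qed

end



context setting begin

lemma S_glue:
  assumes Ysft: "SFT Y"
  shows "\<exists>K. \<forall>x\<in>S. \<forall>y\<in>S. (\<forall>i. - int K \<le> i \<and> i \<le> 0 \<longrightarrow> x i = y i) \<longrightarrow>
           (\<lambda>i. if i \<le> 0 then x i else y i) \<in> S"
proof -
  obtain F where F: "finite F" "Y = X_forbid F" using Ysft unfolding SFT_def by blast
  obtain r where r: "\<And>x x' t. x \<in> S \<Longrightarrow> x' \<in> S \<Longrightarrow> (\<forall>i. t - int r \<le> i \<and> i \<le> t + int r \<longrightarrow> x i = x' i) \<Longrightarrow> phi x t = phi x' t"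
    using cont_at by blast
  obtain N where N: "RC N" using rc_exists by blast
  obtain l where l: "\<forall>x\<in>S. \<forall>w\<in>Y. agree l (phi x) w \<longrightarrow> (\<exists>z\<in>S. agree N x z \<and> phi z = w)"
    using unif_open by blast
  define L where "L = N + Max (insert 0 (length ` F))"
  have L: "\<forall>f\<in>F. length f \<le> L"
  proof
    fix f assume "f \<in> F"
    then have "length f \<le> Max (insert 0 (length ` F))" using F(1) by (intro Max_ge) auto
    then show "length f \<le> L" by (simp add: L_def)
  qed
  have LN: "N \<le> L" by (simp add: L_def)
  define K where "K = 2 * L + 2 * r + 2 * N"
  have "\<forall>x\<in>S. \<forall>y\<in>S. (\<forall>i. - int K \<le> i \<and> i \<le> 0 \<longrightarrow> x i = y i) \<longrightarrow>
           (\<lambda>i. if i \<le> 0 then x i else y i) \<in> S"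
  proof (intro ballI impI)
    fix x y assume xS: "x \<in> S" and yS: "y \<in> S" and xy: "\<forall>i. - int K \<le> i \<and> i \<le> 0 \<longrightarrow> x i = y i"
    define g where "g = (\<lambda>i. if i \<le> 0 then x i else y i)"
    have pxy: "phi x i = phi y i" if "- int K + int r \<le> i" "i \<le> - int r" for i
    proof (rule r[OF xS yS])
      show "\<forall>j. i - int r \<le> j \<and> j \<le> i + int r \<longrightarrow> x j = y j"
        using xy that by auto
    qed
    define c where "c = - int r - int L"
    define w where "w = (\<lambda>i. if i \<le> c then phi x i else phi y i)"
    have wY: "w \<in> Y" unfolding w_def F(2)
    proof (rule glue_forbid[OF L])
      show "phi x \<in> X_forbid F" "phi y \<in> X_forbid F" using imgY xS yS F(2) by blast+
      show "\<forall>i. c < i \<and> i \<le> c + int L \<longrightarrow> phi x i = phi y i"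
        using pxy by (simp add: c_def K_def)
    qed
    have wx: "w i = phi x i" if "i \<le> - int r" for i
      using pxy that by (auto simp: w_def c_def K_def)
    have wy: "w i = phi y i" if "- int K + int r \<le> i" for i
      using pxy that by (auto simp: w_def c_def K_def)
    have "\<exists>z\<in>S. agree k' g z" for k'
    proof -
      define t where "t = - int k' - int l - int r - int N"
      have s: "tr t x \<in> S" "phi (tr t x) = tr t (phi x)" using S_tr xS by blast+
      have twY: "tr t w \<in> Y" using wY F(2) X_forbid_tr by blast
      have "agree l (tr t (phi x)) (tr t w)" unfolding agree_tr
        using wx by (simp add: t_def)
      then obtain z0 where z0: "z0 \<in> S" "agree N (tr t x) z0" "phi z0 = tr t w"
        using l s twY by metis
      define z where "z = tr (- t) z0"
      have zS: "z \<in> S" and pz0: "phi z = tr (- t) (phi z0)" using S_tr z0(1) z_def by blast+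
      have pz: "phi z = w" using pz0 z0(3) by (simp add: tr_tr)
      have "z0 = tr t z" by (simp add: z_def tr_tr)
      then have "agree N (tr t x) (tr t z)" using z0(2) by simp
      then have zx0: "\<forall>i. t - int N \<le> i \<and> i \<le> t + int N \<longrightarrow> x i = z i" by (simp add: agree_tr)
      have P1: "z i = x i" if "t - int N \<le> i" "i \<le> - int r - int N + 1" for i
      proof (rule prop_fin[OF N zS xS, of t "- int r"])
        show "\<forall>i. t - int N \<le> i \<and> i \<le> t \<longrightarrow> z i = x i" using zx0 by auto
        show "\<forall>i. t - int N \<le> i \<and> i \<le> - int r \<longrightarrow> phi z i = phi x i" using wx pz by auto
      qed (use that in auto)
      have P2: "z i = y i" if "- int r - int N - int N \<le> i" for i
      proof (rule prop_inf[OF N zS yS, of "- int r - int N"])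
        show "\<forall>i. - int r - int N - int N \<le> i \<and> i \<le> - int r - int N \<longrightarrow> z i = y i"
        proof (intro allI impI)
          fix i assume a: "- int r - int N - int N \<le> i \<and> i \<le> - int r - int N"
          have "z i = x i" using P1 a by (simp add: t_def)
          moreover have "x i = y i" using xy a by (simp add: K_def)
          ultimately show "z i = y i" by simp
        qed
        show "\<forall>i. - int r - int N - int N \<le> i \<longrightarrow> phi z i = phi y i"
          using wy pz by (auto simp: K_def)
      qed (use that in auto)
      have "agree k' g z" unfolding agree_def
      proof (intro allI impI)
        fix i assume a: "- int k' \<le> i \<and> i \<le> int k'"
        show "g i = z i"
        proof (cases "i \<le> - int r - int N")
          case True
          then have "z i = x i" using P1 a by (simp add: t_def)
          then show ?thesis using True by (simp add: g_def)
        next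
          case False
          then have zy: "z i = y i" using P2 by simp
          show ?thesis
          proof (cases "i \<le> 0")
            case True
            then have "x i = y i" using xy False by (simp add: K_def)
            then show ?thesis using zy True by (simp add: g_def)
          next
            case False then show ?thesis using zy by (simp add: g_def)
          qed
        qed
      qed
      then show ?thesis using zS by blast
    qed
    then show "g \<in> S" using closedS unfolding closed_set_def by (metis agree_sym)
  qed
  then show ?thesis by blast
qed

end



definition wd :: "(int \<Rightarrow> 'a) \<Rightarrow> int \<Rightarrow> nat \<Rightarrow> 'a list" where
  "wd x s n = map (\<lambda>j. x (s + int j)) [0..<n]"

lemma length_wd[simp]: "length (wd x s n) = n" by (simp add: wd_def)

lemma occurs_wd: "occurs_at (wd x s n) x s"
  unfolding occurs_at_def by (simp add: wd_def del: upt_Suc)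

lemma wd_occurs: "occurs_at u x s \<Longrightarrow> wd x s (length u) = u"
  by (rule nth_equalityI) (simp_all add: wd_def occurs_at_def del: upt_Suc)

lemma wd_append: "wd x s (n + m) = wd x s n @ wd x (s + int n) m"
proof (rule nth_equalityI)
  show "length (wd x s (n + m)) = length (wd x s n @ wd x (s + int n) m)" by simp
  fix i assume "i < length (wd x s (n + m))"
  then have i: "i < n + m" by simp
  show "wd x s (n + m) ! i = (wd x s n @ wd x (s + int n) m) ! i"
  proof (cases "i < n")
    case True then show ?thesis using i by (simp add: wd_def nth_append del: upt_Suc)
  next
    case False
    then have "i - n < m" using i by simp
    then have "(wd x s n @ wd x (s + int n) m) ! i = x (s + int n + int (i - n))"
      using i False by (simp add: wd_def nth_append del: upt_Suc)
    moreover have "wd x s (n + m) ! i = x (s + int i)" using i by (simp add: wd_def del: upt_Suc)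
    moreover have "s + int n + int (i - n) = s + int i" using False by simp
    ultimately show ?thesis by simp
  qed
qed

context setting begin

lemma SFT_S:
  assumes Ysft: "SFT Y"
  shows "SFT S"
proof -
  obtain K where K: "\<forall>x\<in>S. \<forall>y\<in>S. (\<forall>i. - int K \<le> i \<and> i \<le> 0 \<longrightarrow> x i = y i) \<longrightarrow>
           (\<lambda>i. if i \<le> 0 then x i else y i) \<in> S" using S_glue[OF Ysft] by blast
  define F' where "F' = {u. length u = K + 2 \<and> u \<notin> words S}"
  have fin: "finite F'"
  proof (rule finite_subset)
    show "F' \<subseteq> {xs. set xs \<subseteq> UNIV \<and> length xs = K + 2}" by (auto simp: F'_def)
    show "finite {xs. set xs \<subseteq> (UNIV::'a set) \<and> length xs = K + 2}"
      by (rule finite_lists_length_eq) simp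
  qed
  have "S = X_forbid F'"
  proof
    show "S \<subseteq> X_forbid F'"
      unfolding X_forbid_def F'_def words_def by blast
  next
    show "X_forbid F' \<subseteq> S"
    proof
      fix x assume x: "x \<in> X_forbid F'"
      have win: "wd x a (K+2) \<in> words S" for a
      proof (rule ccontr)
        assume "wd x a (K+2) \<notin> words S"
        then have "wd x a (K+2) \<in> F'" by (simp add: F'_def)
        then show False using x occurs_wd unfolding X_forbid_def by blast
      qed
      have base: "\<exists>z\<in>S. \<forall>i. a \<le> i \<and> i \<le> a + int K + 1 \<longrightarrow> z i = x i" for a
      proof -
        obtain v j where v: "v \<in> S" "occurs_at (wd x a (K+2)) v j"
          using win[of a] unfolding words_def by blast
        have "tr (j - a) v \<in> S" using S_tr v(1) by blast
        moreover have "tr (j - a) v i = x i" if "a \<le> i \<and> i \<le> a + int K + 1" for i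
        proof -
          define q where "q = nat (i - a)"
          have q: "q < K + 2" "int q = i - a" using that by (auto simp: q_def)
          then have "v (j + int q) = wd x a (K+2) ! q" using v(2) unfolding occurs_at_def length_wd by blast
          also have "\<dots> = x (a + int q)" using q unfolding wd_def by (simp del: upt_Suc)
          finally have "v (j + (i - a)) = x i" using q by simp
          moreover have "tr (j - a) v i = v (j + (i - a))" unfolding tr_app by (rule arg_cong[where f=v]) simp
          ultimately show ?thesis by simp
        qed
        ultimately show ?thesis by (intro bexI[of _ "tr (j - a) v"]) auto
      qed
      have stepm: "\<forall>a. \<exists>z\<in>S. \<forall>i. a \<le> i \<and> i \<le> a + int K + 1 + int m \<longrightarrow> z i = x i" for m
      proof (induction m)
        case 0 then show ?case using base by simp
      next
        case (Suc m)
        show ?case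
        proof
          fix a
          obtain z where z: "z \<in> S" "\<forall>i. a \<le> i \<and> i \<le> a + int K + 1 + int m \<longrightarrow> z i = x i"
            using Suc by blast
          obtain z' where z': "z' \<in> S" "\<forall>i. a + int m + 1 \<le> i \<and> i \<le> a + int m + 1 + int K + 1 \<longrightarrow> z' i = x i"
            using base[of "a + int m + 1"] by blast
          define b where "b = a + int m + int K + 1"
          have tz: "tr b z \<in> S" "tr b z' \<in> S" using S_tr z(1) z'(1) by blast+
          have "\<forall>i. - int K \<le> i \<and> i \<le> 0 \<longrightarrow> tr b z i = tr b z' i"
          proof (intro allI impI)
            fix i assume "- int K \<le> i \<and> i \<le> 0"
            then have "z (i + b) = x (i + b)" "z' (i + b) = x (i + b)" using z(2) z'(2)
              by (simp_all add: b_def)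
            then show "tr b z i = tr b z' i" by (simp add: tr_app)
          qed
          then have G0: "(\<lambda>i. if i \<le> 0 then tr b z i else tr b z' i) \<in> S" using K tz(1) tz(2) by (rule_tac K[rule_format]) auto
          have "tr (- b) (\<lambda>i. if i \<le> 0 then tr b z i else tr b z' i) = (\<lambda>i. if i \<le> b then z i else z' i)"
            by (auto simp: tr_def)
          then have GS: "(\<lambda>i. if i \<le> b then z i else z' i) \<in> S" using S_tr[OF G0, of "- b"] by simp
          have "\<forall>i. a \<le> i \<and> i \<le> a + int K + 1 + int (Suc m) \<longrightarrow> (if i \<le> b then z i else z' i) = x i"
          proof (intro allI impI)
            fix i assume a: "a \<le> i \<and> i \<le> a + int K + 1 + int (Suc m)"
            show "(if i \<le> b then z i else z' i) = x i"
            proof (cases "i \<le> b")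
              case True then show ?thesis using z(2) a by (simp add: b_def)
            next
              case False then show ?thesis using z'(2) a by (simp add: b_def)
            qed
          qed
          then show "\<exists>z\<in>S. \<forall>i. a \<le> i \<and> i \<le> a + int K + 1 + int (Suc m) \<longrightarrow> z i = x i"
            by (rule bexI[OF _ GS])
        qed
      qed
      have "\<exists>z\<in>S. agree k x z" for k
      proof -
        obtain z where z: "z \<in> S" "\<forall>i. - int k \<le> i \<and> i \<le> - int k + int K + 1 + int (2 * k) \<longrightarrow> z i = x i"
          using stepm[of "2 * k"] by blast
        have "agree k x z" unfolding agree_def using z(2) by auto
        then show ?thesis using z(1) by blast
      qed
      then show "x \<in> S" using closedS unfolding closed_set_def by (metis agree_sym)
    qed
  qed
  then show ?thesis using fin unfolding SFT_def by blast
qed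

end



context setting begin

lemma NW:
  assumes Ysft: "SFT Y" and Yirr: "irreducible Y"
  shows "nonwandering S"
  unfolding nonwandering_def
proof
  fix u assume "u \<in> words S"
  then obtain x i where x: "x \<in> S" "occurs_at u x i" unfolding words_def by blast
  define x0 where "x0 = tr i x"
  have x0: "x0 \<in> S" "occurs_at u x0 0" using S_tr x by (auto simp: x0_def occurs_tr)
  define U where "U = {z\<in>S. occurs_at u z 0}"
  have "rel_open S U" unfolding rel_open_def
  proof (intro conjI ballI)
    show "U \<subseteq> S" by (auto simp: U_def)
    fix z assume "z \<in> U"
    then have zu: "occurs_at u z 0" by (simp add: U_def)
    have "\<forall>y\<in>S. agree (length u) z y \<longrightarrow> y \<in> U"
    proof (intro ballI impI)
      fix y assume yS: "y \<in> S" and ag: "agree (length u) z y"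
      have "occurs_at u y 0" unfolding occurs_at_def
      proof (intro allI impI)
        fix j assume j: "j < length u"
        then have "z (0 + int j) = y (0 + int j)" by (intro agree_at[OF ag]) auto
        then show "y (0 + int j) = u ! j" using zu j by (simp add: occurs_at_def)
      qed
      then show "y \<in> U" using yS by (simp add: U_def)
    qed
    then show "\<exists>k. \<forall>y\<in>S. agree k z y \<longrightarrow> y \<in> U" by blast
  qed
  then have "rel_open Y (phi ` U)" by (rule openS)
  moreover have "x0 \<in> U" using x0 by (simp add: U_def)
  then have "phi x0 \<in> phi ` U" by (rule imageI)
  ultimately obtain k where k: "\<forall>y\<in>Y. agree k (phi x0) y \<longrightarrow> y \<in> phi ` U"
    unfolding rel_open_def by blast
  obtain F where F: "finite F" "Y = X_forbid F" using Ysft unfolding SFT_def by blast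
  define Lf where "Lf = Max (insert 0 (length ` F))"
  have Lf: "\<forall>f\<in>F. length f \<le> Lf"
  proof
    fix f assume "f \<in> F"
    then show "length f \<le> Lf" unfolding Lf_def using F(1) by (intro Max_ge) auto
  qed
  define k' where "k' = k + Lf + length u"
  define b where "b = wd (phi x0) (- int k') (2 * k' + 1)"
  have lb: "length b = 2 * k' + 1" by (simp add: b_def)
  have "b \<in> words Y" unfolding words_def b_def using imgY[OF x0(1)] occurs_wd by blast
  then obtain w where "b @ w @ b \<in> words Y" using Yirr unfolding irreducible_def by blast
  then obtain v s where v: "v \<in> Y" "occurs_at (b @ w @ b) v s" unfolding words_def by blast
  define bw where "bw = b @ w"
  define p where "p = length bw"
  have pge: "p \<ge> 2 * k' + 1" by (simp add: p_def bw_def lb)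
  have ppos: "p > 0" using pge by simp
  define y where "y = (\<lambda>i. bw ! nat ((i + int k') mod int p))"
  have bwb: "(b @ w @ b) ! q = bw ! (q mod p)" if "q < p + length b" for q
  proof -
    have e: "b @ w @ b = bw @ b" by (simp add: bw_def)
    show ?thesis
    proof (cases "q < p")
      case True then show ?thesis unfolding e by (simp add: p_def nth_append)
    next
      case False
      then have qm: "q mod p = q - p" using that lb pge by (simp add: mod_if)
      have ql: "q - p < length b" using that False by simp
      then have "(bw @ b) ! q = b ! (q - p)" using False by (simp add: p_def nth_append)
      moreover have "bw ! (q - p) = b ! (q - p)" using ql by (simp add: bw_def nth_append)
      ultimately show ?thesis unfolding e using qm by simp
    qed
  qed
  have yY: "y \<in> Y" unfolding F(2) X_forbid_def
  proof (intro CollectI ballI allI notI)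
    fix f i assume f: "f \<in> F" and occ: "occurs_at f y i"
    define Q where "Q = nat ((i + int k') mod int p)"
    have Qi: "int Q = (i + int k') mod int p" using ppos by (simp add: Q_def)
    have "int Q < int p" using Qi ppos by simp
    then have Qp: "Q < p" by simp
    have lf: "length f \<le> k'" using Lf f by (simp add: k'_def) (meson le_add1 le_trans trans_le_add2)
    have "occurs_at f v (s + int Q)" unfolding occurs_at_def
    proof (intro allI impI)
      fix j assume j: "j < length f"
      have qj: "Q + j < p + length b" using Qp j lf lb by simp
      have lbwb: "length (b @ w @ b) = p + length b" by (simp add: p_def bw_def)
      have "v (s + int (Q + j)) = (b @ w @ b) ! (Q + j)"
        using v(2) qj lbwb unfolding occurs_at_def by metis
      then have v1: "v (s + int Q + int j) = bw ! ((Q + j) mod p)" using bwb[OF qj] by (simp add: add.assoc)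
      have "int ((Q + j) mod p) = (int Q + int j) mod int p" by (simp add: zmod_int)
      also have "\<dots> = ((i + int k') mod int p + int j) mod int p" using Qi by simp
      also have "\<dots> = (i + int k' + int j) mod int p" by (rule mod_add_left_eq)
      also have "\<dots> = (i + int j + int k') mod int p" by (simp add: ac_simps)
      finally have "nat ((i + int j + int k') mod int p) = (Q + j) mod p" by linarith
      then have "y (i + int j) = bw ! ((Q + j) mod p)" by (simp add: y_def)
      moreover have "y (i + int j) = f ! j" using occ j by (simp add: occurs_at_def)
      ultimately show "v (s + int Q + int j) = f ! j" using v1 by simp
    qed
    then show False using v(1) f F(2) unfolding X_forbid_def by blast
  qed
  have "agree k (phi x0) y" unfolding agree_def
  proof (intro allI impI)
    fix i assume i: "- int k \<le> i \<and> i \<le> int k"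
    define n where "n = nat (i + int k')"
    have n: "int n = i + int k'" "n < length b" using i lb by (auto simp: n_def k'_def)
    have "0 \<le> i + int k'" "i + int k' < int p" using n pge lb by linarith+
    then have "(i + int k') mod int p = int n" using n by (simp add: mod_pos_pos_trivial)
    then have "y i = bw ! n" by (simp add: y_def)
    also have "\<dots> = b ! n" using n by (simp add: bw_def nth_append)
    also have "\<dots> = phi x0 (- int k' + int n)" using n lb unfolding b_def wd_def by (simp del: upt_Suc)
    also have "\<dots> = phi x0 i" using n by simp
    finally show "phi x0 i = y i" by simp
  qed
  then have "y \<in> phi ` U" using k yY by blast
  then obtain z where "z \<in> U" and zy: "phi z = y" by (rule imageE) simp
  then have z: "z \<in> S" "occurs_at u z 0" by (simp_all add: U_def)
  obtain N where N: "RC N" using rc_exists by blast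
  have ytr: "tr (- (int j * int p)) y = y" for j
  proof
    fix i
    have "i + - (int j * int p) + int k' = (i + int k') + (- int j) * int p" by (simp add: algebra_simps)
    then have "(i + - (int j * int p) + int k') mod int p = (i + int k') mod int p"
      by (simp only: mod_mult_self1)
    then show "tr (- (int j * int p)) y i = y i" by (simp add: tr_def y_def)
  qed
  define a where "a j = tr (- (int j * int p)) z" for j
  have aS: "a j \<in> S" "phi (a j) = y" for j
    using S_tr[OF z(1), of "- (int j * int p)"] zy ytr[of j] by (simp_all add: a_def)
  have aocc: "occurs_at u (a j) (int j * int p)" for j by (simp add: a_def occurs_tr z(2))
  define f where "f j = wd (a j) (- int N) (N + 1)" for j
  have "range f \<subseteq> {xs. set xs \<subseteq> UNIV \<and> length xs = N + 1}" by (auto simp: f_def)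
  moreover have "finite {xs. set xs \<subseteq> (UNIV::'a set) \<and> length xs = N + 1}"
    by (rule finite_lists_length_eq) simp
  ultimately have "finite (range f)" by (rule finite_subset)
  then have "\<not> inj f" using finite_imageD infinite_UNIV_nat by blast
  then obtain j1' j2' where "j1' \<noteq> j2'" "f j1' = f j2'" unfolding inj_def by blast
  then obtain j1 j2 where j12: "j1 < j2" "f j1 = f j2" by (metis linorder_neqE_nat)
  have fn: "f j ! n = a j (- int N + int n)" if "n < N + 1" for j n
    using that by (simp add: f_def wd_def del: upt_Suc)
  have h1: "\<forall>i. 0 - int N \<le> i \<and> i \<le> 0 \<longrightarrow> a j1 i = a j2 i"
  proof (intro allI impI)
    fix i :: int assume i: "0 - int N \<le> i \<and> i \<le> 0"
    define n where "n = nat (i + int N)"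
    have n: "n < N + 1" "- int N + int n = i" using i by (auto simp: n_def)
    show "a j1 i = a j2 i" using fn[OF n(1), of j1] fn[OF n(1), of j2] j12(2) n(2) by simp
  qed
  have h2: "\<forall>i. 0 - int N \<le> i \<longrightarrow> phi (a j1) i = phi (a j2) i" using aS by simp
  have eqa: "a j1 i = a j2 i" if "- int N \<le> i" for i
    using prop_inf[OF N aS(1) aS(1) h1 h2] that by simp
  define A where "A = a j1"
  define P1 where "P1 = int j1 * int p"
  define P2 where "P2 = int j2 * int p"
  have occ1: "occurs_at u A P1" using aocc by (simp add: A_def P1_def)
  have P2nn: "0 \<le> P2" by (simp add: P2_def)
  have occ2: "occurs_at u A P2" unfolding occurs_at_def
  proof (intro allI impI)
    fix jj assume jj: "jj < length u"
    have "A (P2 + int jj) = a j2 (P2 + int jj)" unfolding A_def by (rule eqa) (use P2nn in simp)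
    also have "\<dots> = u ! jj" using aocc[of j2] jj by (simp add: occurs_at_def P2_def)
    finally show "A (P2 + int jj) = u ! jj" .
  qed
  have "P2 - P1 = int ((j2 - j1) * p)" using j12(1) by (simp add: P1_def P2_def of_nat_diff algebra_simps)
  moreover have "(j2 - j1) * p \<ge> p"
  proof -
    have "j2 - j1 \<ge> 1" using j12(1) by simp
    then show ?thesis by (metis mult_1 mult_le_mono1)
  qed
  ultimately obtain D where D: "P2 - P1 = int D" "D \<ge> p" by blast
  have Du: "D \<ge> length u" using D(2) pge by (simp add: k'_def)
  define d where "d = D - length u"
  have "wd A P1 (length u + d + length u) = wd A P1 (length u + d) @ wd A (P1 + int (length u + d)) (length u)"
    by (rule wd_append)
  also have "wd A P1 (length u + d) = wd A P1 (length u) @ wd A (P1 + int (length u)) d"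
    by (rule wd_append)
  also have "P1 + int (length u + d) = P2" using D Du by (simp add: d_def)
  also have "wd A P1 (length u) = u" by (rule wd_occurs[OF occ1])
  also have "wd A P2 (length u) = u" by (rule wd_occurs[OF occ2])
  finally have W: "wd A P1 (length u + d + length u) = u @ wd A (P1 + int (length u)) d @ u" by simp
  have "A \<in> S" using aS by (simp add: A_def)
  then have "wd A P1 (length u + d + length u) \<in> words S" unfolding words_def using occurs_wd by blast
  then show "\<exists>w. u @ w @ u \<in> words S" using W by metis
qed

end

theorem proposition3p4:
  fixes \<Sigma> :: "(int \<Rightarrow> 'a::finite) set"
    and Y :: "(int \<Rightarrow> 'b::finite) set"
    and \<phi> :: "(int \<Rightarrow> 'a) \<Rightarrow> (int \<Rightarrow> 'b)"
  assumes "shift_space \<Sigma>"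
    and "SFT Y" and "irreducible Y"
    and "open_code \<Sigma> Y \<phi>"
    and "right_closing \<Sigma> \<phi>"
  shows "SFT \<Sigma> \<and> nonwandering \<Sigma>"
proof -
  interpret setting \<Sigma> Y \<phi>
    by unfold_locales (use assms in auto)
  show ?thesis using SFT_S[OF assms(2)] NW[OF assms(2,3)] by blast
qed

end
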